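(* Let $p\ge 1$ and $q\ge 2$ be integers with $q-1\le p\le \frac12 q(q-1)$. Then there is a Zariski open, dense subset $\mathcal{O}$ of $\mathcal{V}(p,q)=\Lambda^2(\mathbb{R}^q)^*\otimes\mathbb{R}^p$ such that for every $\rho\in\mathcal{O}\cap V^o_{p,q}$, the simply connected 2-step nilpotent Lie group $N_\rho$ satisfies the partial automatic continuity. Moreover, for every $\rho\in\mathcal{O}\cap V^o_{p,q}$ and every abstract (not necessarily continuous) group automorphism $F$ of $N_\rho$, there exist a central automorphism $\mu$ of $N_\rho$ and a Lie group automorphism $\overline{F}$ of $N_\rho$ such that $F=\mu\circ\overline{F}$.
   Context: Every $\rho\in\mathcal{V}(p,q)=\Lambda^2(\mathbb{R}^q)^*\otimes\mathbb{R}^p$ (a linear map $\Lambda^2\mathbb{R}^q\to\mathbb{R}^p$) defines a Lie bracket $[\cdot,\cdot]_\rho$ on $\mathbb{R}^q\oplus\mathbb{R}^p$ by $[x,y]_\rho=\rho(x\wedge y)$ for $x,y\in\mathbb{R}^q$ and all brackets involving $\mathbb{R}^p$ equal to $0$; write $\mathcal{N}_\rho=(\mathbb{R}^q\oplus\mathbb{R}^p,[\cdot,\cdot]_\rho)$. Let $V^o_{p,q}\subseteq\mathcal{V}(p,q)$ be the (Zariski open, dense) set of surjective $\rho$, i.e. those for which $\mathcal{N}_\rho$ is 2-step nilpotent with $[\mathcal{N}_\rho,\mathcal{N}_\rho]=\mathbb{R}^p$ of dimension $p$ ("type $(p,q)$"). $N_\rho$ denotes the simply connected Lie group with Lie algebra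 $\mathcal{N}_\rho$. For a simply connected nilpotent Lie group $N$ with Lie algebra $\mathcal{N}$ (so $\exp:\mathcal{N}\to N$ is a diffeomorphism): a central automorphism of $N$ is an abstract group automorphism $F$ with $x^{-1}F(x)$ in the center of $N$ for all $x$; a Lie group automorphism is a continuous (hence smooth) automorphism. Field automorphisms: if $\mathcal{N}=\mathcal{N}_1\oplus\cdots\oplus\mathcal{N}_k$ is a direct sum of ideals, for each $\mathcal{N}_i$ that is the realification of a complex Lie algebra choose a $\mathbb{C}$-basis $e_1,\dots,e_m$ of $\mathcal{N}_i$ and a field automorphism $\varphi$ of $\mathbb{C}$ fixing the structure constants in this basis and set $\sigma_i(\sum x_le_l)=\sum\varphi(x_l)e_l$; otherwise $\sigma_i=\mathrm{id}$. Then $\sigma=\sigma_1\times\cdots\times\sigma_k$ is a field automorphism of $\mathcal{N}$ and $\exp\circ\sigma\circ\exp^{-1}$ is a field automorphism of $N$ (if $\mathcal{N}$ is not such a realification in any way, only the identity arises). $N$ satisfies the partial automatic continuity if every abstract group automorphism $F$ of $N$ can be written $F=\mu\circ\overline{F}\circ\Phi$ with $\mu$ a central automorphism, $\overline{F}$ a Lie group automorphism and $\Phi$ a field automorphism of $N$. *)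

theory Defs
  imports "HOL-Analysis.Analysis"
begin

text \<open>An element rho of V(p,q) is encoded by its coordinates rho i j k, i.e. the
 k-th component of rho(e_i wedge e_j); the space V(p,q) consists of the alternating ones.
 The dimensions are q = CARD('q) and p = CARD('p).\<close>

definition Vpq :: "('q \<Rightarrow> 'q \<Rightarrow> 'p \<Rightarrow> real) set" where
  "Vpq = {\<rho>. \<forall>i j k. \<rho> i j k = - \<rho> j i k}"

inductive poly_in :: "('x \<Rightarrow> real) set \<Rightarrow> ('x \<Rightarrow> real) \<Rightarrow> bool" for C where
  coord: "c \<in> C \<Longrightarrow> poly_in C c"
| const: "poly_in C (\<lambda>_. a)"
| add: "poly_in C f \<Longrightarrow> poly_in C g \<Longrightarrow> poly_in C (\<lambda>x. f x + g x)"
| mult: "poly_in C f \<Longrightarrow> poly_in C g \<Longrightarrow> poly_in C (\<lambda>x. f x * g x)"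

definition V_coords :: "(('q \<Rightarrow> 'q \<Rightarrow> 'p \<Rightarrow> real) \<Rightarrow> real) set" where
  "V_coords = {(\<lambda>\<rho>. \<rho> i j k) | i j k. True}"

definition V_poly :: "(('q \<Rightarrow> 'q \<Rightarrow> 'p \<Rightarrow> real) \<Rightarrow> real) \<Rightarrow> bool" where
  "V_poly f \<longleftrightarrow> poly_in V_coords f"

definition zariski_open_V :: "('q \<Rightarrow> 'q \<Rightarrow> 'p \<Rightarrow> real) set \<Rightarrow> bool" where
  "zariski_open_V Ob \<longleftrightarrow>
     (\<exists>S. (\<forall>f\<in>S. V_poly f) \<and> Ob = {\<rho>\<in>Vpq. \<exists>f\<in>S. f \<rho> \<noteq> 0})"

definition zariski_dense_V :: "('q \<Rightarrow> 'q \<Rightarrow> 'p \<Rightarrow> real) set \<Rightarrow> bool" where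
  "zariski_dense_V Ob \<longleftrightarrow> Ob \<subseteq> Vpq \<and>
     (\<forall>f. V_poly f \<and> (\<forall>\<rho>\<in>Ob. f \<rho> = 0) \<longrightarrow> (\<forall>\<rho>\<in>Vpq. f \<rho> = 0))"

definition brk :: "('q::finite \<Rightarrow> 'q \<Rightarrow> 'p::finite \<Rightarrow> real) \<Rightarrow> real^'q \<Rightarrow> real^'q \<Rightarrow> real^'p" where
  "brk \<rho> x y = (\<chi> k. \<Sum>i\<in>UNIV. \<Sum>j\<in>UNIV. x$i * y$j * \<rho> i j k)"

text \<open>Surjective rho: the image of the linear map Lambda^2 R^q -> R^p, i.e. the span of all
 rho(x wedge y), is all of R^p.\<close>
definition Vo :: "('q::finite \<Rightarrow> 'q \<Rightarrow> 'p::finite \<Rightarrow> real) set" where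
  "Vo = {\<rho>\<in>Vpq. span (range (\<lambda>(x,y). brk \<rho> x y)) = UNIV}"

definition lie_br :: "('q::finite \<Rightarrow> 'q \<Rightarrow> 'p::finite \<Rightarrow> real) \<Rightarrow>
   ((real^'q) \<times> (real^'p)) \<Rightarrow> ((real^'q) \<times> (real^'p)) \<Rightarrow> ((real^'q) \<times> (real^'p))" where
  "lie_br \<rho> u v = (0, brk \<rho> (fst u) (fst v))"

text \<open>The simply connected group N_rho, realised on the Lie algebra via exp (exponential
 coordinates), with the Baker-Campbell-Hausdorff product X*Y = X + Y + 1/2[X,Y];
 in these coordinates exp is the identity map.\<close>
definition nmul :: "('q::finite \<Rightarrow> 'q \<Rightarrow> 'p::finite \<Rightarrow> real) \<Rightarrow>
   ((real^'q) \<times> (real^'p)) \<Rightarrow> ((real^'q) \<times> (real^'p)) \<Rightarrow> ((real^'q) \<times> (real^'p))" where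
  "nmul \<rho> u v = u + v + (1/2) *\<^sub>R lie_br \<rho> u v"

definition ninv :: "((real^'q) \<times> (real^'p)) \<Rightarrow> ((real^'q) \<times> (real^'p))" where
  "ninv u = - u"

definition ncenter :: "('q::finite \<Rightarrow> 'q \<Rightarrow> 'p::finite \<Rightarrow> real) \<Rightarrow> ((real^'q) \<times> (real^'p)) set" where
  "ncenter \<rho> = {c. \<forall>g. nmul \<rho> c g = nmul \<rho> g c}"

definition group_aut :: "('q::finite \<Rightarrow> 'q \<Rightarrow> 'p::finite \<Rightarrow> real) \<Rightarrow>
   (((real^'q) \<times> (real^'p)) \<Rightarrow> ((real^'q) \<times> (real^'p))) \<Rightarrow> bool" where
  "group_aut \<rho> F \<longleftrightarrow> bij F \<and> (\<forall>a b. F (nmul \<rho> a b) = nmul \<rho> (F a) (F b))"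

definition central_aut :: "('q::finite \<Rightarrow> 'q \<Rightarrow> 'p::finite \<Rightarrow> real) \<Rightarrow>
   (((real^'q) \<times> (real^'p)) \<Rightarrow> ((real^'q) \<times> (real^'p))) \<Rightarrow> bool" where
  "central_aut \<rho> F \<longleftrightarrow> group_aut \<rho> F \<and> (\<forall>x. nmul \<rho> (ninv x) (F x) \<in> ncenter \<rho>)"

definition lie_group_aut :: "('q::finite \<Rightarrow> 'q \<Rightarrow> 'p::finite \<Rightarrow> real) \<Rightarrow>
   (((real^'q) \<times> (real^'p)) \<Rightarrow> ((real^'q) \<times> (real^'p))) \<Rightarrow> bool" where
  "lie_group_aut \<rho> F \<longleftrightarrow> group_aut \<rho> F \<and> continuous_on UNIV F"

definition field_aut_C :: "(complex \<Rightarrow> complex) \<Rightarrow> bool" where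
  "field_aut_C \<phi> \<longleftrightarrow> bij \<phi> \<and> (\<forall>a b. \<phi> (a + b) = \<phi> a + \<phi> b) \<and> (\<forall>a b. \<phi> (a * b) = \<phi> a * \<phi> b)"

definition cscal :: "('n \<Rightarrow> 'n) \<Rightarrow> complex \<Rightarrow> 'n \<Rightarrow> 'n::real_vector" where
  "cscal J c u = Re c *\<^sub>R u + Im c *\<^sub>R J u"

definition ccomb :: "('n \<Rightarrow> 'n) \<Rightarrow> 'n list \<Rightarrow> (nat \<Rightarrow> complex) \<Rightarrow> 'n::real_vector" where
  "ccomb J es cs = (\<Sum>l<length es. cscal J (cs l) (es ! l))"

definition fin_supp :: "nat \<Rightarrow> (nat \<Rightarrow> complex) \<Rightarrow> bool" where
  "fin_supp m cs \<longleftrightarrow> (\<forall>l\<ge>m. cs l = 0)"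

text \<open>s is a field automorphism of the ideal U, where U (with bracket br) is the
 realification of a complex Lie algebra (complex structure J), es is a C-basis of U,
 phi a field automorphism of C fixing the structure constants in this basis, and
 s(sum c_l e_l) = sum phi(c_l) e_l.\<close>
definition complex_field_map :: "('n::real_vector \<Rightarrow> 'n \<Rightarrow> 'n) \<Rightarrow> 'n set \<Rightarrow> ('n \<Rightarrow> 'n) \<Rightarrow> bool" where
  "complex_field_map br U s \<longleftrightarrow>
    (\<exists>J es \<phi>. linear J \<and> (\<forall>u\<in>U. J u \<in> U) \<and> (\<forall>u\<in>U. J (J u) = - u)
       \<and> (\<forall>u\<in>U. \<forall>v\<in>U. br (J u) v = J (br u v))
       \<and> set es \<subseteq> U
       \<and> (\<forall>u\<in>U. \<exists>!cs. fin_supp (length es) cs \<and> ccomb J es cs = u)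
       \<and> field_aut_C \<phi>
       \<and> (\<forall>a<length es. \<forall>b<length es. \<forall>cs. fin_supp (length es) cs \<and>
              ccomb J es cs = br (es ! a) (es ! b) \<longrightarrow> (\<forall>l. \<phi> (cs l) = cs l))
       \<and> (\<forall>cs. fin_supp (length es) cs \<longrightarrow> s (ccomb J es cs) = ccomb J es (\<phi> \<circ> cs)))"

definition lie_ideal :: "('n::real_vector \<Rightarrow> 'n \<Rightarrow> 'n) \<Rightarrow> 'n set \<Rightarrow> bool" where
  "lie_ideal br U \<longleftrightarrow> subspace U \<and> (\<forall>x. \<forall>u\<in>U. br x u \<in> U)"

text \<open>Field automorphisms of a Lie algebra (vector space 'n with bracket br):
 given a direct sum decomposition into ideals U_0, ..., U_(k-1), on each summand either
 the identity or a complex field map as above.\<close>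
definition field_aut_alg :: "('n::real_vector \<Rightarrow> 'n \<Rightarrow> 'n) \<Rightarrow> ('n \<Rightarrow> 'n) \<Rightarrow> bool" where
  "field_aut_alg br \<sigma> \<longleftrightarrow>
    (\<exists>(k::nat) Us ss. (\<forall>i<k. lie_ideal br (Us i))
       \<and> (\<forall>v. \<exists>!us. (\<forall>i<k. us i \<in> Us i) \<and> (\<forall>i\<ge>k. us i = 0) \<and> (\<Sum>i<k. us i) = v)
       \<and> (\<forall>i<k. (\<forall>u\<in>Us i. ss i u = u) \<or> complex_field_map br (Us i) (ss i))
       \<and> (\<forall>us. (\<forall>i<k. us i \<in> Us i) \<longrightarrow> \<sigma> (\<Sum>i<k. us i) = (\<Sum>i<k. ss i (us i))))"

text \<open>Field automorphisms of N_rho: exp o sigma o exp^-1, which in exponential coordinates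
 is sigma itself.\<close>
definition group_field_aut :: "('q::finite \<Rightarrow> 'q \<Rightarrow> 'p::finite \<Rightarrow> real) \<Rightarrow>
   (((real^'q) \<times> (real^'p)) \<Rightarrow> ((real^'q) \<times> (real^'p))) \<Rightarrow> bool" where
  "group_field_aut \<rho> \<Phi> \<longleftrightarrow> field_aut_alg (lie_br \<rho>) \<Phi>"

definition partial_automatic_continuity :: "('q::finite \<Rightarrow> 'q \<Rightarrow> 'p::finite \<Rightarrow> real) \<Rightarrow> bool" where
  "partial_automatic_continuity \<rho> \<longleftrightarrow>
    (\<forall>F. group_aut \<rho> F \<longrightarrow>
      (\<exists>\<mu> Fb \<Phi>. central_aut \<rho> \<mu> \<and> lie_group_aut \<rho> Fb \<and> group_field_aut \<rho> \<Phi>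
                \<and> F = \<mu> \<circ> Fb \<circ> \<Phi>))"

end

theory Submission
  imports Defs "HOL-Computational_Algebra.Polynomial"
begin

lemma poly_in_sum: "finite I \<Longrightarrow> (\<And>i. i\<in>I \<Longrightarrow> poly_in C (f i)) \<Longrightarrow> poly_in C (\<lambda>x. \<Sum>i\<in>I. f i x)"
proof (induction I rule: finite_induct)
  case empty then show ?case using poly_in.const[of C 0] by simp
next
  case (insert a F) then show ?case using poly_in.add[of C "f a" "\<lambda>x. \<Sum>i\<in>F. f i x"] by simp
qed

lemma poly_in_prod: "finite I \<Longrightarrow> (\<And>i. i\<in>I \<Longrightarrow> poly_in C (f i)) \<Longrightarrow> poly_in C (\<lambda>x. \<Prod>i\<in>I. f i x)"
proof (induction I rule: finite_induct)
  case empty then show ?case using poly_in.const[of C 1] by simp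
next
  case (insert a F) then show ?case using poly_in.mult[of C "f a" "\<lambda>x. \<Prod>i\<in>F. f i x"] by simp
qed

lemma poly_in_diff: "poly_in C f \<Longrightarrow> poly_in C g \<Longrightarrow> poly_in C (\<lambda>x. f x - g x)"
proof -
  assume f: "poly_in C f" and g: "poly_in C g"
  have "poly_in C (\<lambda>x. (-1) * g x)" using poly_in.mult[OF poly_in.const g] .
  from poly_in.add[OF f this] show ?thesis by simp
qed

lemma poly_in_line:
  "poly_in V_coords f \<Longrightarrow> \<exists>P. \<forall>t. f (\<lambda>i j k. r0 i j k + t * (r i j k - r0 i j k)) = poly P t"
proof (induction rule: poly_in.induct)
  case (coord c)
  then obtain i j k where c: "c = (\<lambda>\<rho>. \<rho> i j k)" unfolding V_coords_def by blast
  show ?case by (rule exI[of _ "[:r0 i j k, r i j k - r0 i j k:]"]) (simp add: c algebra_simps)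
next
  case (const a) show ?case by (rule exI[of _ "[:a:]"]) simp
next
  case (add f g) then obtain P Q where "\<forall>t. f (\<lambda>i j k. r0 i j k + t * (r i j k - r0 i j k)) = poly P t"
     "\<forall>t. g (\<lambda>i j k. r0 i j k + t * (r i j k - r0 i j k)) = poly Q t" by blast
  then show ?case by (intro exI[of _ "P + Q"]) simp
next
  case (mult f g) then obtain P Q where "\<forall>t. f (\<lambda>i j k. r0 i j k + t * (r i j k - r0 i j k)) = poly P t"
     "\<forall>t. g (\<lambda>i j k. r0 i j k + t * (r i j k - r0 i j k)) = poly Q t" by blast
  then show ?case by (intro exI[of _ "P * Q"]) simp
qed

lemma density_aux:
  assumes g: "V_poly g" and r0: "r0 \<in> Vpq" and g0: "g r0 \<noteq> 0" and f: "V_poly f"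
    and van: "\<forall>\<rho>\<in>Vpq. g \<rho> \<noteq> 0 \<longrightarrow> f \<rho> = 0" and r: "r \<in> Vpq"
  shows "f r = 0"
proof -
  define l where "l = (\<lambda>t::real. (\<lambda>i j k. r0 i j k + t * (r i j k - r0 i j k)))"
  have lV: "l t \<in> Vpq" for t
    unfolding l_def Vpq_def
  proof (intro CollectI allI)
    fix i j k
    have a: "r0 i j k = - r0 j i k" using r0 unfolding Vpq_def by blast
    have b: "r i j k = - r j i k" using r unfolding Vpq_def by blast
    show "r0 i j k + t * (r i j k - r0 i j k) = - (r0 j i k + t * (r j i k - r0 j i k))"
      by (simp only: a b) (simp add: algebra_simps)
  qed
  obtain P where P: "\<forall>t. g (l t) = poly P t" using poly_in_line[of g r0 r] g unfolding V_poly_def l_def by blast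
  obtain Q where Q: "\<forall>t. f (l t) = poly Q t" using poly_in_line[of f r0 r] f unfolding V_poly_def l_def by blast
  have l0: "l 0 = r0" unfolding l_def by simp
  have "P \<noteq> 0" using P g0 l0 by (metis poly_0)
  then have fin: "finite {t. poly P t = 0}" by (rule poly_roots_finite)
  have sub: "UNIV - {t. poly P t = 0} \<subseteq> {t. poly Q t = 0}"
    using P Q van lV by (metis (mono_tags, lifting) DiffD2 mem_Collect_eq subsetI)
  have "infinite (UNIV - {t::real. poly P t = 0})"
    using fin by (simp add: Diff_infinite_finite infinite_UNIV_char_0)
  then have "infinite {t. poly Q t = 0}" using sub finite_subset by blast
  then have "Q = 0" using poly_roots_finite by blast
  moreover have "l 1 = r" unfolding l_def by simp
  ultimately show ?thesis using Q by (metis poly_0)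
qed

definition good :: "('q::finite \<Rightarrow> 'q \<Rightarrow> 'p::finite \<Rightarrow> real) \<Rightarrow> bool" where
 "good \<rho> \<longleftrightarrow> (\<forall>t::'q\<Rightarrow>'q\<Rightarrow>real. (\<forall>a b k. (\<Sum>j\<in>UNIV. t j b * \<rho> a j k) = (\<Sum>i\<in>UNIV. t i a * \<rho> i b k))
     \<longrightarrow> (\<exists>c. \<forall>i j. t i j = (if i = j then c else 0)))"

lemma brk_add_left: "brk \<rho> (x + y) z = brk \<rho> x z + brk \<rho> y z"
  by (simp add: brk_def vec_eq_iff algebra_simps sum.distrib)
lemma brk_add_right: "brk \<rho> z (x + y) = brk \<rho> z x + brk \<rho> z y"
  by (simp add: brk_def vec_eq_iff algebra_simps sum.distrib)
lemma brk_scale_left: "brk \<rho> (c *\<^sub>R x) y = c *\<^sub>R brk \<rho> x y"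
  by (simp add: brk_def vec_eq_iff sum_distrib_left ac_simps)
lemma brk_scale_right: "brk \<rho> x (c *\<^sub>R y) = c *\<^sub>R brk \<rho> x y"
  by (simp add: brk_def vec_eq_iff sum_distrib_left ac_simps)
lemma brk_zero_left[simp]: "brk \<rho> 0 y = 0"
  by (simp add: brk_def vec_eq_iff)
lemma brk_zero_right[simp]: "brk \<rho> x 0 = 0"
  by (simp add: brk_def vec_eq_iff)
lemma brk_minus_left: "brk \<rho> (- x) y = - brk \<rho> x y"
  using brk_scale_left[of \<rho> "-1" x y] by simp
lemma brk_minus_right: "brk \<rho> x (- y) = - brk \<rho> x y"
  using brk_scale_right[of \<rho> x "-1" y] by simp
lemma brk_diff_right: "brk \<rho> x (y - z) = brk \<rho> x y - brk \<rho> x z"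
  using brk_add_right[of \<rho> x y "-z"] brk_minus_right[of \<rho> x z] by simp
lemma brk_diff_left: "brk \<rho> (y - z) x = brk \<rho> y x - brk \<rho> z x"
  using brk_add_left[of \<rho> y "-z" x] brk_minus_left[of \<rho> z x] by simp

lemma brk_antisym:
  assumes "\<rho> \<in> Vpq" shows "brk \<rho> x y = - brk \<rho> y x"
proof -
  have r: "\<rho> i j k = - \<rho> j i k" for i j k using assms unfolding Vpq_def by blast
  have eq: "(\<Sum>i\<in>UNIV. \<Sum>j\<in>UNIV. x$i * y$j * \<rho> i j k) = - (\<Sum>i\<in>UNIV. \<Sum>j\<in>UNIV. y$i * x$j * \<rho> i j k)" for k
  proof -
    have "(\<Sum>i\<in>UNIV. \<Sum>j\<in>UNIV. x$i * y$j * \<rho> i j k) = (\<Sum>i\<in>UNIV. \<Sum>j\<in>UNIV. - (y$j * x$i * \<rho> j i k))"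
      by (intro sum.cong refl) (subst r, simp)
    also have "\<dots> = - (\<Sum>j\<in>UNIV. \<Sum>i\<in>UNIV. y$j * x$i * \<rho> j i k)"
      by (subst sum.swap) (simp add: sum_negf)
    finally show ?thesis .
  qed
  show ?thesis unfolding brk_def vec_eq_iff
    by (simp only: vec_lambda_beta vector_uminus_component eq simp_thms)
qed

lemma brk_self: "\<rho> \<in> Vpq \<Longrightarrow> brk \<rho> x x = 0"
  using brk_antisym[of \<rho> x x] by (simp add: vec_eq_iff)

lemma axis_comp: "(axis a 1 :: real^'n) $ i = (if i = a then 1 else 0)"
  by (simp add: axis_def)

lemma brk_axis_left: "brk \<rho> (axis a 1) y $ k = (\<Sum>j\<in>UNIV. y$j * \<rho> a j k)"
proof -
  have "brk \<rho> (axis a 1) y $ k = (\<Sum>i\<in>UNIV. \<Sum>j\<in>UNIV. (if i = a then 1 else 0) * y$j * \<rho> i j k)"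
    unfolding brk_def vec_lambda_beta axis_comp by (rule refl)
  also have "\<dots> = (\<Sum>i\<in>UNIV. (if i = a then (\<Sum>j\<in>UNIV. y$j * \<rho> i j k) else 0))"
    by (rule sum.cong[OF refl]) simp
  also have "\<dots> = (\<Sum>j\<in>UNIV. y$j * \<rho> a j k)" by simp
  finally show ?thesis .
qed
lemma brk_axis_right: "brk \<rho> y (axis b 1) $ k = (\<Sum>i\<in>UNIV. y$i * \<rho> i b k)"
proof -
  have "brk \<rho> y (axis b 1) $ k = (\<Sum>i\<in>UNIV. \<Sum>j\<in>UNIV. y$i * (if j = b then 1 else 0) * \<rho> i j k)"
    unfolding brk_def vec_lambda_beta axis_comp by (rule refl)
  also have "\<dots> = (\<Sum>i\<in>UNIV. \<Sum>j\<in>UNIV. (if j = b then y$i * \<rho> i j k else 0))"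
    by (intro sum.cong refl) simp
  also have "\<dots> = (\<Sum>i\<in>UNIV. y$i * \<rho> i b k)"
    by simp
  finally show ?thesis .
qed

lemma good_scalar:
  fixes \<rho> :: "'q::finite \<Rightarrow> 'q \<Rightarrow> 'p::finite \<Rightarrow> real" and L :: "real^'q \<Rightarrow> real^'q"
  assumes g: "good \<rho>" and L: "linear L" and sa: "\<And>u v. brk \<rho> u (L v) = brk \<rho> (L u) v"
  shows "\<exists>c. \<forall>v. L v = c *\<^sub>R v"
proof -
  define t where "t j b = L (axis b 1) $ j" for j b
  have "\<forall>a b k. (\<Sum>j\<in>UNIV. t j b * \<rho> a j k) = (\<Sum>i\<in>UNIV. t i a * \<rho> i b k)"
  proof (intro allI)
    fix a b k
    have "brk \<rho> (axis a 1) (L (axis b 1)) $ k = brk \<rho> (L (axis a 1)) (axis b 1) $ k" using sa by simp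
    then show "(\<Sum>j\<in>UNIV. t j b * \<rho> a j k) = (\<Sum>i\<in>UNIV. t i a * \<rho> i b k)"
      unfolding brk_axis_left brk_axis_right t_def .
  qed
  then obtain c where c: "\<And>i j. t i j = (if i = j then c else 0)" using g unfolding good_def by blast
  have "L = (\<lambda>v. c *\<^sub>R v)"
  proof (rule linear_eq_stdbasis[OF L])
    show "linear (\<lambda>v. c *\<^sub>R v)" by (simp add: linear_scaleR)
    fix b :: "real^'q" assume "b \<in> Basis"
    then obtain i where b: "b = axis i 1" unfolding Basis_vec_def by auto
    show "L b = c *\<^sub>R b" unfolding b vec_eq_iff
    proof
      fix j
      have "L (axis i 1) $ j = t j i" by (simp add: t_def)
      also have "\<dots> = (if j = i then c else 0)" by (rule c)
      also have "\<dots> = (c *\<^sub>R axis i 1) $ j" by (simp add: axis_comp)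
      finally show "L (axis i 1) $ j = (c *\<^sub>R axis i 1) $ j" .
    qed
  qed
  then show ?thesis by auto
qed

lemma nondeg:
  assumes V: "\<rho> \<in> Vpq" and g: "good \<rho>" and q2: "CARD('q::finite) \<ge> 2"
    and w: "\<forall>u. brk (\<rho> :: 'q \<Rightarrow> 'q \<Rightarrow> 'p::finite \<Rightarrow> real) u w = 0"
  shows "w = 0"
proof -
  obtain a b :: 'q where ab: "a \<noteq> b"
  proof -
    have "\<not> (\<forall>a b::'q. a = b)"
    proof
      assume "\<forall>a b::'q. a = b"
      then have "(UNIV::'q set) = {undefined}" by auto
      then have "card (UNIV::'q set) = card {undefined::'q}" by (rule arg_cong)
      then have "CARD('q) = 1" by simp
      then show False using q2 by simp
    qed
    then show ?thesis using that by blast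
  qed
  define L where "L v = (v $ a) *\<^sub>R w" for v :: "real^'q"
  have lin: "linear L" unfolding L_def by (rule linearI) (simp_all add: algebra_simps)
  have "brk \<rho> u (L v) = brk \<rho> (L u) v" for u v
    unfolding L_def brk_scale_left brk_scale_right using w brk_antisym[OF V, of w v] by simp
  then obtain c where c: "\<And>v. L v = c *\<^sub>R v" using good_scalar[OF g lin] by blast
  have "L (axis b 1) = 0" unfolding L_def using ab by (simp add: axis_comp)
  then have "(c *\<^sub>R (axis b 1 :: real^'q)) $ b = 0" using c[of "axis b 1"] by simp
  then have "c = 0" by (simp add: axis_comp)
  then show ?thesis using c[of "axis a 1"] unfolding L_def by simp
qed

lemma real_field_hom_id:
  fixes f :: "real \<Rightarrow> real"
  assumes add: "\<And>x y. f (x + y) = f x + f y" and mul: "\<And>x y. f (x * y) = f x * f y" and one: "f 1 = 1"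
  shows "f x = x"
proof -
  have f0: "f 0 = 0" using add[of 0 0] by simp
  have fneg: "f (- y) = - f y" for y using add[of y "-y"] f0 by simp
  have fdiff: "f (y - z) = f y - f z" for y z using add[of y "-z"] fneg[of z] by simp
  have fnat: "f (real n) = real n" for n
    by (induction n) (simp_all add: f0 add one)
  have fint: "f (of_int m) = of_int m" for m
  proof (cases "m \<ge> 0")
    case True then show ?thesis using fnat[of "nat m"] by simp
  next
    case False then show ?thesis using fnat[of "nat (-m)"] fneg[of "real (nat (-m))"] by simp
  qed
  have frat: "f r = r" if rQ: "r \<in> \<rat>" for r
  proof -
    obtain m n where n: "n > 0" and r: "r = of_int m / of_int n" using Rats_cases'[OF rQ] by metis
    have e: "of_int n * r = (of_int m::real)" using n r by simp
    have "f (of_int m) = f (of_int n * r)" using e by simp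
    also have "\<dots> = f (of_int n) * f r" by (rule mul)
    also have "\<dots> = of_int n * f r" by (simp only: fint)
    finally have "of_int n * f r = of_int m" by (simp only: fint)
    then have "of_int n * f r = of_int n * r" using e by simp
    then show ?thesis using n by simp
  qed
  have fpos: "y \<ge> 0 \<Longrightarrow> f y \<ge> 0" for y
  proof -
    assume y: "y \<ge> 0"
    have "f y = f (sqrt y) * f (sqrt y)" using mul[of "sqrt y" "sqrt y"] y by simp
    then show "f y \<ge> 0" by simp
  qed
  have mono: "y \<le> z \<Longrightarrow> f y \<le> f z" for y z using fpos[of "z - y"] fdiff[of z y] by simp
  show ?thesis
  proof (rule ccontr)
    assume "f x \<noteq> x"
    then consider "f x < x" | "x < f x" by linarith
    then show False
    proof cases
      case 1 then obtain r where "r \<in> \<rat>" "f x < r" "r < x" using Rats_dense_in_real by blast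
      then show False using mono[of r x] frat by fastforce
    next
      case 2 then obtain r where "r \<in> \<rat>" "x < r" "r < f x" using Rats_dense_in_real by blast
      then show False using mono[of x r] frat by fastforce
    qed
  qed
qed


lemma nmul_pair: "nmul \<rho> (x,z) (y,w) = (x+y, z+w+(1/2) *\<^sub>R brk \<rho> x y)"
  by (simp add: nmul_def lie_br_def)

lemma center_iff:
  assumes V: "\<rho> \<in> Vpq"
  shows "c \<in> ncenter \<rho> \<longleftrightarrow> (\<forall>y. brk \<rho> (fst c) y = 0)"
proof -
  obtain x z where c: "c = (x,z)" by (cases c)
  show ?thesis
  proof
    assume h: "c \<in> ncenter \<rho>"
    show "\<forall>y. brk \<rho> (fst c) y = 0"
    proof
      fix y
      have "nmul \<rho> (x,z) (y,0) = nmul \<rho> (y,0) (x,z)" using h c unfolding ncenter_def by blast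
      then have "(1/2) *\<^sub>R brk \<rho> x y = (1/2) *\<^sub>R brk \<rho> y x" by (simp add: nmul_pair)
      then have "brk \<rho> x y = - brk \<rho> x y" using brk_antisym[OF V, of y x] by simp
      then show "brk \<rho> (fst c) y = 0" using c by (simp add: vec_eq_iff)
    qed
  next
    assume h: "\<forall>y. brk \<rho> (fst c) y = 0"
    show "c \<in> ncenter \<rho>" unfolding ncenter_def
    proof (intro CollectI allI)
      fix g :: "(real^'a) \<times> (real^'b)"
      obtain y w where g: "g = (y,w)" by (cases g)
      have "brk \<rho> x y = 0" using h c by simp
      moreover have "brk \<rho> y x = 0" using h c brk_antisym[OF V, of y x] by simp
      ultimately show "nmul \<rho> c g = nmul \<rho> g c" unfolding c g nmul_pair by (simp add: algebra_simps)
    qed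
  qed
qed

lemma A_linear:
  fixes \<rho> :: "'q::finite \<Rightarrow> 'q \<Rightarrow> 'p::finite \<Rightarrow> real" and A :: "real^'q \<Rightarrow> real^'q"
    and B :: "real^'p \<Rightarrow> real^'p"
  assumes g: "good \<rho>" and nd: "\<And>w. (\<forall>u. brk \<rho> u w = 0) \<Longrightarrow> w = 0"
    and Aadd: "\<And>x y. A (x + y) = A x + A y" and bA: "bij A"
    and K: "\<And>x y. brk \<rho> (A x) (A y) = B (brk \<rho> x y)"
  shows "linear A"
proof -
  have Ai1: "A (inv A u) = u" for u using bA by (simp add: bij_is_surj surj_f_inv_f)
  have Ai2: "inv A (A x) = x" for x using bA by (simp add: bij_is_inj inv_f_f)
  have injA: "inj A" using bA bij_is_inj by blast
  have iadd: "inv A (u + v) = inv A u + inv A v" for u v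
  proof -
    have "A (inv A (u + v)) = A (inv A u + inv A v)" by (simp add: Ai1 Aadd)
    then show ?thesis using injA by (simp add: inj_eq)
  qed
  have ex: "\<exists>c. \<forall>x. A (t *\<^sub>R x) = c *\<^sub>R A x" for t
  proof -
    define L where "L u = A (t *\<^sub>R inv A u)" for u
    have Ladd: "L (u + v) = L u + L v" for u v by (simp add: L_def iadd scaleR_add_right Aadd)
    have Lsa: "brk \<rho> u (L v) = brk \<rho> (L u) v" for u v
    proof -
      define x where "x = inv A u"
      define y where "y = inv A v"
      have u: "u = A x" and v: "v = A y" by (simp_all add: x_def y_def Ai1)
      have "brk \<rho> u (L v) = brk \<rho> (A x) (A (t *\<^sub>R y))" by (simp add: L_def u v Ai2)
      also have "\<dots> = B (brk \<rho> x (t *\<^sub>R y))" by (rule K)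
      also have "\<dots> = B (brk \<rho> (t *\<^sub>R x) y)" by (simp add: brk_scale_left brk_scale_right)
      also have "\<dots> = brk \<rho> (A (t *\<^sub>R x)) (A y)" by (rule K[symmetric])
      also have "\<dots> = brk \<rho> (L u) v" by (simp add: L_def u v Ai2)
      finally show ?thesis .
    qed
    have Lhom: "L (s *\<^sub>R v) = s *\<^sub>R L v" for s v
    proof -
      have "brk \<rho> u (L (s *\<^sub>R v) - s *\<^sub>R L v) = 0" for u
        by (simp add: brk_diff_right Lsa brk_scale_right)
      then have "L (s *\<^sub>R v) - s *\<^sub>R L v = 0" using nd by blast
      then show ?thesis by simp
    qed
    have "linear L" by (rule linearI) (simp_all add: Ladd Lhom)
    then obtain c where c: "\<And>v. L v = c *\<^sub>R v" using good_scalar[OF g] Lsa by blast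
    show ?thesis
    proof (intro exI allI)
      fix x show "A (t *\<^sub>R x) = c *\<^sub>R A x" using c[of "A x"] by (simp add: L_def Ai2)
    qed
  qed
  then have "\<forall>t. \<exists>c. \<forall>x. A (t *\<^sub>R x) = c *\<^sub>R A x" by blast
  then obtain cf where cf: "\<And>t x. A (t *\<^sub>R x) = cf t *\<^sub>R A x" by metis
  have A0: "A 0 = 0" using Aadd[of 0 0] by simp
  define x0 where "x0 = (axis undefined 1 :: real^'q)"
  have "x0 \<noteq> 0" unfolding x0_def by (simp add: axis_eq_0_iff)
  then have Ax0: "A x0 \<noteq> 0" using injA A0 by (metis injD)
  have cadd: "cf (s + t) = cf s + cf t" for s t
  proof -
    have "cf (s + t) *\<^sub>R A x0 = (cf s + cf t) *\<^sub>R A x0"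
      using cf[of "s + t" x0] cf[of s x0] cf[of t x0] Aadd[of "s *\<^sub>R x0" "t *\<^sub>R x0"]
      by (simp add: scaleR_add_left)
    then show ?thesis using Ax0 by simp
  qed
  have cmul: "cf (s * t) = cf s * cf t" for s t
  proof -
    have "cf (s * t) *\<^sub>R A x0 = (cf s * cf t) *\<^sub>R A x0"
      using cf[of "s * t" x0] cf[of s "t *\<^sub>R x0"] cf[of t x0] by simp
    then show ?thesis using Ax0 by simp
  qed
  have c1: "cf 1 = 1"
  proof -
    have "cf 1 *\<^sub>R A x0 = 1 *\<^sub>R A x0" using cf[of 1 x0] by simp
    then show ?thesis using Ax0 by (metis scaleR_cancel_right)
  qed
  have cid: "cf t = t" for t by (rule real_field_hom_id[OF cadd cmul c1])
  show "linear A" by (rule linearI) (simp_all add: Aadd cf cid)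
qed

lemma B_linear:
  fixes \<rho> :: "'q::finite \<Rightarrow> 'q \<Rightarrow> 'p::finite \<Rightarrow> real" and A :: "real^'q \<Rightarrow> real^'q"
    and B :: "real^'p \<Rightarrow> real^'p"
  assumes sp: "span (range (\<lambda>(x,y). brk \<rho> x y)) = UNIV" and lA: "linear A"
    and Badd: "\<And>z w. B (z + w) = B z + B w"
    and K: "\<And>x y. brk \<rho> (A x) (A y) = B (brk \<rho> x y)"
  shows "linear B"
proof -
  have B0: "B 0 = 0" using Badd[of 0 0] by simp
  define S where "S = {v. \<forall>s. B (s *\<^sub>R v) = s *\<^sub>R B v}"
  have "subspace S"
  proof (rule subspaceI)
    show "0 \<in> S" unfolding S_def by (simp add: B0)
    fix x y assume "x \<in> S" "y \<in> S"
    then show "x + y \<in> S" unfolding S_def by (simp add: scaleR_add_right Badd)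
  next
    fix c x assume "x \<in> S"
    then show "c *\<^sub>R x \<in> S" unfolding S_def by simp
  qed
  moreover have "range (\<lambda>(x,y). brk \<rho> x y) \<subseteq> S"
  proof
    fix v assume "v \<in> range (\<lambda>(x,y). brk \<rho> x y)"
    then obtain x y where v: "v = brk \<rho> x y" by auto
    show "v \<in> S" unfolding S_def
    proof (intro CollectI allI)
      fix s
      have "B (s *\<^sub>R v) = B (brk \<rho> (s *\<^sub>R x) y)" by (simp add: v brk_scale_left)
      also have "\<dots> = brk \<rho> (A (s *\<^sub>R x)) (A y)" by (rule K[symmetric])
      also have "\<dots> = s *\<^sub>R brk \<rho> (A x) (A y)" by (simp add: linear_scale[OF lA] brk_scale_left)
      also have "\<dots> = s *\<^sub>R B v" by (simp add: K v)
      finally show "B (s *\<^sub>R v) = s *\<^sub>R B v" .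
    qed
  qed
  ultimately have "span (range (\<lambda>(x,y). brk \<rho> x y)) \<subseteq> S" by (rule span_minimal[rotated])
  then have "\<And>v s. B (s *\<^sub>R v) = s *\<^sub>R B v" using sp unfolding S_def by auto
  then show "linear B" by (intro linearI) (simp_all add: Badd)
qed

lemma vec_half: "(u::real^'n) = (1/2) *\<^sub>R u + (1/2) *\<^sub>R u"
  by (simp add: vec_eq_iff)

lemma main_decomp:
  fixes \<rho> :: "'q::finite \<Rightarrow> 'q \<Rightarrow> 'p::finite \<Rightarrow> real"
  assumes V: "\<rho> \<in> Vpq" and g: "good \<rho>" and q2: "CARD('q) \<ge> 2"
    and sp: "span (range (\<lambda>(x,y). brk \<rho> x y)) = UNIV" and F: "group_aut \<rho> F"
  shows "\<exists>\<mu> Fb. central_aut \<rho> \<mu> \<and> lie_group_aut \<rho> Fb \<and> F = \<mu> \<circ> Fb"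
proof -
  have bijF: "bij F" and hom: "\<And>a b. F (nmul \<rho> a b) = nmul \<rho> (F a) (F b)"
    using F unfolding group_aut_def by auto
  have injF: "inj F" using bijF bij_is_inj by blast
  have surjF: "surj F" using bijF bij_is_surj by blast
  have nd: "\<And>w. (\<forall>u. brk \<rho> u w = 0) \<Longrightarrow> w = 0" using nondeg[OF V g q2] by blast
  have nd2: "x = 0" if h: "\<forall>y. brk \<rho> x y = 0" for x
  proof -
    have "\<forall>y. brk \<rho> y x = 0" using h brk_antisym[OF V] by (metis neg_equal_0_iff_equal)
    then show ?thesis using nd by blast
  qed
  have cen: "c \<in> ncenter \<rho> \<longleftrightarrow> fst c = 0" for c
    using center_iff[OF V, of c] nd2 by auto
  have F0: "F (0,0) = (0,0)"
  proof -
    obtain a b where ab: "F (0,0) = (a,b)" by (cases "F (0,0)")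
    have "nmul \<rho> (0,0) (0,0) = ((0,0) :: (real^'q) \<times> (real^'p))" by (simp add: nmul_pair)
    then have "F (0,0) = nmul \<rho> (F (0,0)) (F (0,0))" using hom by metis
    then have "(a,b) = (a + a, b + b)" using ab brk_self[OF V, of a] by (simp add: nmul_pair)
    then show ?thesis using ab by simp
  qed
  have cenF: "F c \<in> ncenter \<rho>" if c: "c \<in> ncenter \<rho>" for c
    unfolding ncenter_def
  proof (intro CollectI allI)
    fix g0
    obtain h where h: "g0 = F h" using surjF by (metis surjD)
    have "nmul \<rho> c h = nmul \<rho> h c" using c unfolding ncenter_def by blast
    then show "nmul \<rho> (F c) g0 = nmul \<rho> g0 (F c)" unfolding h by (metis hom)
  qed
  define A where "A x = fst (F (x,0))" for x
  define C where "C x = snd (F (x,0))" for x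
  define B where "B z = snd (F (0,z))" for z
  have FB: "F (0,z) = (0, B z)" for z
  proof -
    have "(0::real^'q, z) \<in> ncenter \<rho>" using cen by simp
    then have "fst (F (0,z)) = 0" using cenF cen by blast
    then show ?thesis unfolding B_def by (simp add: prod_eq_iff)
  qed
  have FA: "F (x,0) = (A x, C x)" for x by (simp add: A_def C_def)
  have Fxz: "F (x,z) = (A x, C x + B z)" for x z
  proof -
    have "(x,z) = nmul \<rho> (x,0) (0,z)" by (simp add: nmul_pair)
    then have "F (x,z) = nmul \<rho> (A x, C x) (0, B z)" using hom FA FB by metis
    then show ?thesis by (simp add: nmul_pair)
  qed
  have Badd: "B (z + w) = B z + B w" for z w
  proof -
    have "(0, z + w) = nmul \<rho> (0::real^'q, z) (0, w)" by (simp add: nmul_pair)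
    then have "F (0, z + w) = nmul \<rho> (0, B z) (0, B w)" using hom FB by metis
    then show ?thesis using FB by (simp add: nmul_pair)
  qed
  have B0: "B 0 = 0" using Badd[of 0 0] by simp
  have Bneg: "B (- z) = - B z" for z
  proof -
    have h: "B z + B (- z) = 0" using Badd[of z "-z"] B0 by simp
    have "B (- z) = (B z + B (- z)) - B z" by simp
    also have "\<dots> = - B z" using h by simp
    finally show ?thesis .
  qed
  have Bhalf: "B ((1/2) *\<^sub>R u) = (1/2) *\<^sub>R B u" for u
  proof -
    have "B u = B ((1/2) *\<^sub>R u) + B ((1/2) *\<^sub>R u)" using Badd vec_half[of u] by metis
    then show ?thesis by (simp add: vec_eq_iff)
  qed
  have E: "(A (x + y), C (x + y) + B ((1/2) *\<^sub>R brk \<rho> x y)) = (A x + A y, C x + C y + (1/2) *\<^sub>R brk \<rho> (A x) (A y))"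
    for x y
  proof -
    have "nmul \<rho> (x,0) (y,0) = (x + y, (1/2) *\<^sub>R brk \<rho> x y)" by (simp add: nmul_pair)
    then have "F (x + y, (1/2) *\<^sub>R brk \<rho> x y) = nmul \<rho> (A x, C x) (A y, C y)" using hom FA by metis
    then show ?thesis unfolding Fxz by (simp add: nmul_pair)
  qed
  have Aadd: "A (x + y) = A x + A y" for x y using E[of x y] by simp
  have Ceq: "C (x + y) + (1/2) *\<^sub>R B (brk \<rho> x y) = C x + C y + (1/2) *\<^sub>R brk \<rho> (A x) (A y)" for x y
    using E[of x y] Bhalf by simp
  have K: "brk \<rho> (A x) (A y) = B (brk \<rho> x y)" for x y
  proof -
    have e1: "C (x + y) + (1/2) *\<^sub>R B (brk \<rho> x y) = C x + C y + (1/2) *\<^sub>R brk \<rho> (A x) (A y)" by (rule Ceq)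
    have "C (y + x) + (1/2) *\<^sub>R B (brk \<rho> y x) = C y + C x + (1/2) *\<^sub>R brk \<rho> (A y) (A x)" by (rule Ceq)
    then have e2: "C (x + y) - (1/2) *\<^sub>R B (brk \<rho> x y) = C x + C y - (1/2) *\<^sub>R brk \<rho> (A x) (A y)"
      using brk_antisym[OF V, of y x] brk_antisym[OF V, of "A y" "A x"] Bneg
      by (simp add: add.commute)
    show ?thesis unfolding vec_eq_iff
    proof
      fix i
      have "(C (x + y) + (1/2) *\<^sub>R B (brk \<rho> x y)) $ i = (C x + C y + (1/2) *\<^sub>R brk \<rho> (A x) (A y)) $ i"
        using e1 by simp
      moreover have "(C (x + y) - (1/2) *\<^sub>R B (brk \<rho> x y)) $ i = (C x + C y - (1/2) *\<^sub>R brk \<rho> (A x) (A y)) $ i"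
        using e2 by simp
      ultimately show "brk \<rho> (A x) (A y) $ i = B (brk \<rho> x y) $ i" by simp
    qed
  qed
  have Cadd: "C (x + y) = C x + C y" for x y using Ceq[of x y] K[of x y] by simp
  have A0: "A 0 = 0" using Aadd[of 0 0] by simp
  have Adiff: "A (x - y) = A x - A y" for x y using Aadd[of "x - y" y] by (simp add: eq_diff_eq)
  have Bdiff: "B (x - y) = B x - B y" for x y using Badd[of "x - y" y] by (simp add: eq_diff_eq)
  have injA: "inj A"
  proof (rule injI)
    fix x y assume "A x = A y"
    then have Ad: "A (x - y) = 0" using Adiff by simp
    define d where "d = x - y"
    have "F (d,0) \<in> ncenter \<rho>" using cen FA Ad d_def by simp
    then have cF: "nmul \<rho> (F (d,0)) g0 = nmul \<rho> g0 (F (d,0))" for g0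
      unfolding ncenter_def by blast
    have "nmul \<rho> (d,0) h = nmul \<rho> h (d,0)" for h
    proof -
      have "F (nmul \<rho> (d,0) h) = nmul \<rho> (F (d,0)) (F h)" by (rule hom)
      also have "\<dots> = nmul \<rho> (F h) (F (d,0))" by (rule cF)
      also have "\<dots> = F (nmul \<rho> h (d,0))" by (rule hom[symmetric])
      finally show ?thesis using injF by (simp add: inj_eq)
    qed
    then have "(d,0) \<in> ncenter \<rho>" unfolding ncenter_def by blast
    then have "d = 0" using cen by simp
    then show "x = y" using d_def by simp
  qed
  have surjA: "surj A"
  proof -
    have "u \<in> range A" for u
    proof -
      obtain p where "F p = (u, 0)" using surjF by (metis surjD)
      then show ?thesis using Fxz by (metis prod.collapse fst_conv rangeI)
    qed
    then show ?thesis by blast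
  qed
  have bijA: "bij A" using injA surjA by (simp add: bij_def)
  have injB: "inj B"
  proof (rule injI)
    fix z w assume "B z = B w"
    then have "F (0, z - w) = F (0,0)" using FB F0 Bdiff by simp
    then show "z = w" using injF by (simp add: inj_eq)
  qed
  have lA: "linear A" by (rule A_linear[OF g nd Aadd bijA K])
  have lB: "linear B" by (rule B_linear[OF sp lA Badd K])
  have surjB: "surj B" using lB injB by (simp add: linear_injective_imp_surjective)
  have Ai1: "A (inv A u) = u" for u using bijA by (simp add: bij_is_surj surj_f_inv_f)
  have Ai2: "inv A (A x) = x" for x using bijA by (simp add: bij_is_inj inv_f_f)
  have Bi1: "B (inv B u) = u" for u using surjB by (simp add: surj_f_inv_f)
  have iadd: "inv A (u + v) = inv A u + inv A v" for u v
  proof -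
    have "A (inv A (u + v)) = A (inv A u + inv A v)" by (simp add: Ai1 Aadd)
    then show ?thesis using injA by (simp add: inj_eq)
  qed
  define Fb where "Fb p = (A (fst p), B (snd p))" for p :: "(real^'q) \<times> (real^'p)"
  define E where "E u = C (inv A u)" for u
  define \<mu> where "\<mu> p = (fst p, snd p + E (fst p))" for p :: "(real^'q) \<times> (real^'p)"
  have Eadd: "E (u + v) = E u + E v" for u v by (simp add: E_def iadd Cadd)
  have lFb: "linear Fb"
    by (rule linearI) (simp_all add: Fb_def linear_add[OF lA] linear_add[OF lB] linear_scale[OF lA] linear_scale[OF lB])
  have contFb: "continuous_on UNIV Fb"
    by (rule linear_continuous_on) (simp add: lFb linear_conv_bounded_linear[symmetric])
  have bijFb: "bij Fb"
  proof (rule bijI)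
    show "inj Fb"
    proof (rule injI)
      fix p p' assume "Fb p = Fb p'"
      then have "A (fst p) = A (fst p')" "B (snd p) = B (snd p')" by (simp_all add: Fb_def)
      then show "p = p'" using injA injB by (simp add: inj_eq prod_eq_iff)
    qed
    show "surj Fb"
    proof (rule surjI)
      fix p show "Fb (inv A (fst p), inv B (snd p)) = p" by (simp add: Fb_def Ai1 Bi1)
    qed
  qed
  have homFb: "Fb (nmul \<rho> a b) = nmul \<rho> (Fb a) (Fb b)" for a b
  proof -
    obtain x z where a: "a = (x,z)" by (cases a)
    obtain y w where b: "b = (y,w)" by (cases b)
    show ?thesis unfolding a b
      by (simp add: nmul_pair Fb_def linear_add[OF lA] linear_add[OF lB] linear_scale[OF lB] K)
  qed
  have lgFb: "lie_group_aut \<rho> Fb"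
    unfolding lie_group_aut_def group_aut_def using bijFb homFb contFb by blast
  have bijmu: "bij \<mu>"
  proof (rule bijI)
    show "inj \<mu>"
    proof (rule injI)
      fix p p' assume eq: "\<mu> p = \<mu> p'"
      have f1: "fst p = fst p'" using arg_cong[OF eq, of fst] unfolding \<mu>_def by (simp only: fst_conv)
      have f2: "snd p + E (fst p) = snd p' + E (fst p')"
        using arg_cong[OF eq, of snd] unfolding \<mu>_def by (simp only: snd_conv)
      have "snd p = snd p'" using f2 unfolding f1 by simp
      then show "p = p'" using f1 by (simp add: prod_eq_iff)
    qed
    show "surj \<mu>"
    proof (rule surjI)
      fix p show "\<mu> (fst p, snd p - E (fst p)) = p" by (simp add: \<mu>_def)
    qed
  qed
  have hommu: "\<mu> (nmul \<rho> a b) = nmul \<rho> (\<mu> a) (\<mu> b)" for a b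
  proof -
    obtain x z where a: "a = (x,z)" by (cases a)
    obtain y w where b: "b = (y,w)" by (cases b)
    show ?thesis unfolding a b by (simp add: nmul_pair \<mu>_def Eadd algebra_simps)
  qed
  have cmu: "central_aut \<rho> \<mu>"
    unfolding central_aut_def group_aut_def
  proof (intro conjI allI)
    show "bij \<mu>" by (rule bijmu)
    fix a b show "\<mu> (nmul \<rho> a b) = nmul \<rho> (\<mu> a) (\<mu> b)" by (rule hommu)
  next
    fix x
    show "nmul \<rho> (ninv x) (\<mu> x) \<in> ncenter \<rho>"
      unfolding cen by (cases x) (simp add: nmul_pair ninv_def \<mu>_def)
  qed
  have "F = \<mu> \<circ> Fb"
  proof
    fix p :: "(real^'q) \<times> (real^'p)"
    obtain x z where p: "p = (x,z)" by (cases p)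
    show "F p = (\<mu> \<circ> Fb) p" unfolding p by (simp add: Fxz \<mu>_def Fb_def E_def Ai2 add.commute)
  qed
  then show ?thesis using cmu lgFb by blast
qed


definition Nmat :: "('q::finite \<Rightarrow> 'q \<Rightarrow> 'p::finite \<Rightarrow> real) \<Rightarrow> real^('q \<times> 'q)^(('q \<times> 'q \<times> 'p) option)" where
  "Nmat \<rho> = (\<chi> r c. case r of None \<Rightarrow> (if fst c = snd c then 1 else 0)
      | Some (a,b,k) \<Rightarrow> (if snd c = b then \<rho> a (fst c) k else 0) - (if snd c = a then \<rho> (fst c) b k else 0))"

definition gpoly :: "('q::finite \<Rightarrow> 'q \<Rightarrow> 'p::finite \<Rightarrow> real) \<Rightarrow> real" where
  "gpoly \<rho> = det (transpose (Nmat \<rho>) ** Nmat \<rho>)"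

lemma sum_UNIV_pair: "(\<Sum>c\<in>(UNIV::('a::finite \<times> 'b::finite) set). h c) = (\<Sum>i\<in>UNIV. \<Sum>j\<in>UNIV. h (i,j))"
  using sum.cartesian_product[of "\<lambda>i j. h (i,j)" UNIV UNIV] by simp

lemma sum_pair_snd:
  "(\<Sum>c\<in>(UNIV::('a::finite \<times> 'b::finite) set). if snd c = b then f c else 0) = (\<Sum>i\<in>UNIV. f (i,b))"
  unfolding sum_UNIV_pair by simp

lemma sum_pair_diag:
  "(\<Sum>c\<in>(UNIV::('a::finite \<times> 'a) set). if fst c = snd c then f c else 0) = (\<Sum>i\<in>UNIV. f (i,i))"
  unfolding sum_UNIV_pair by simp

lemma Nmat_Some:
  "(Nmat \<rho> *v v) $ Some (a,b,k) = (\<Sum>j\<in>UNIV. v$(j,b) * \<rho> a j k) - (\<Sum>i\<in>UNIV. v$(i,a) * \<rho> i b k)"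
proof -
  have "(Nmat \<rho> *v v) $ Some (a,b,k) = (\<Sum>c\<in>UNIV. ((if snd c = b then \<rho> a (fst c) k else 0) - (if snd c = a then \<rho> (fst c) b k else 0)) * v$c)"
    by (simp add: Nmat_def matrix_vector_mult_def)
  also have "\<dots> = (\<Sum>c\<in>UNIV. (if snd c = b then v$c * \<rho> a (fst c) k else 0)) - (\<Sum>c\<in>UNIV. (if snd c = a then v$c * \<rho> (fst c) b k else 0))"
    by (simp add: sum_subtractf[symmetric] left_diff_distrib) (intro sum.cong refl, simp)
  also have "\<dots> = (\<Sum>j\<in>UNIV. v$(j,b) * \<rho> a j k) - (\<Sum>i\<in>UNIV. v$(i,a) * \<rho> i b k)"
    by (simp only: sum_pair_snd fst_conv)
  finally show ?thesis .
qed

lemma Nmat_None: "(Nmat \<rho> *v v) $ None = (\<Sum>i\<in>UNIV. v$(i,i))"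
proof -
  have "(Nmat \<rho> *v v) $ None = (\<Sum>c\<in>UNIV. (if fst c = snd c then v$c else 0))"
    unfolding Nmat_def matrix_vector_mult_def vec_lambda_beta option.case by (intro sum.cong refl) simp
  then show ?thesis by (simp only: sum_pair_diag)
qed

lemma good_iff_inj:
  fixes \<rho> :: "'q::finite \<Rightarrow> 'q \<Rightarrow> 'p::finite \<Rightarrow> real"
  shows "good \<rho> \<longleftrightarrow> inj ((*v) (Nmat \<rho>))"
proof
  assume g: "good \<rho>"
  show "inj ((*v) (Nmat \<rho>))" unfolding linear_injective_0[OF matrix_vector_mul_linear]
  proof (intro allI impI)
    fix v assume v: "Nmat \<rho> *v v = 0"
    define t where "t i j = v $ (i,j)" for i j
    have "\<forall>a b k. (\<Sum>j\<in>UNIV. t j b * \<rho> a j k) = (\<Sum>i\<in>UNIV. t i a * \<rho> i b k)"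
    proof (intro allI)
      fix a b k
      have "(Nmat \<rho> *v v) $ Some (a,b,k) = 0" using v by simp
      then show "(\<Sum>j\<in>UNIV. t j b * \<rho> a j k) = (\<Sum>i\<in>UNIV. t i a * \<rho> i b k)"
        unfolding Nmat_Some t_def by simp
    qed
    then obtain c where c: "\<And>i j. t i j = (if i = j then c else 0)" using g unfolding good_def by blast
    have "(Nmat \<rho> *v v) $ None = 0" using v by simp
    then have "(\<Sum>i\<in>(UNIV::'q set). c) = 0" unfolding Nmat_None using c unfolding t_def by simp
    then have "c = 0" by simp
    show "v = 0" unfolding vec_eq_iff
    proof
      fix p :: "'q \<times> 'q"
      obtain i j where p: "p = (i,j)" by (cases p)
      have "v $ (i,j) = 0" using c[of i j] \<open>c = 0\<close> unfolding t_def by simp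
      then show "v $ p = 0 $ p" using p by simp
    qed
  qed
next
  assume inj: "inj ((*v) (Nmat \<rho>))"
  show "good \<rho>" unfolding good_def
  proof (intro allI impI)
    fix t :: "'q \<Rightarrow> 'q \<Rightarrow> real"
    assume sa: "\<forall>a b k. (\<Sum>j\<in>UNIV. t j b * \<rho> a j k) = (\<Sum>i\<in>UNIV. t i a * \<rho> i b k)"
    define c0 where "c0 = (\<Sum>i\<in>UNIV. t i i) / real CARD('q)"
    define v :: "real^('q \<times> 'q)" where "v = (\<chi> p. t (fst p) (snd p) - (if fst p = snd p then c0 else 0))"
    have "Nmat \<rho> *v v = 0"
    proof (subst vec_eq_iff, intro allI)
      fix r :: "('q \<times> 'q \<times> 'p) option"
      show "(Nmat \<rho> *v v) $ r = 0 $ r"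
      proof (cases r)
        case None
        have "(\<Sum>i\<in>(UNIV::'q set). t i i - c0) = (\<Sum>i\<in>UNIV. t i i) - real CARD('q) * c0"
          by (simp add: sum_subtractf)
        also have "\<dots> = 0" unfolding c0_def by simp
        finally have sum0: "(\<Sum>i\<in>(UNIV::'q set). t i i - c0) = 0" .
        show ?thesis unfolding None Nmat_None v_def by (simp add: sum0)
      next
        case (Some s)
        then obtain a b k where r: "r = Some (a,b,k)" by (metis prod_cases3)
        have e1: "(\<Sum>j\<in>UNIV. v$(j,b) * \<rho> a j k) = (\<Sum>j\<in>UNIV. t j b * \<rho> a j k) - c0 * \<rho> a b k"
        proof -
          have "(\<Sum>j\<in>UNIV. v$(j,b) * \<rho> a j k) = (\<Sum>j\<in>UNIV. t j b * \<rho> a j k - (if j = b then c0 * \<rho> a j k else 0))"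
            unfolding v_def by (intro sum.cong refl) (simp add: left_diff_distrib)
          then show ?thesis by (simp add: sum_subtractf)
        qed
        have e2: "(\<Sum>i\<in>UNIV. v$(i,a) * \<rho> i b k) = (\<Sum>i\<in>UNIV. t i a * \<rho> i b k) - c0 * \<rho> a b k"
        proof -
          have "(\<Sum>i\<in>UNIV. v$(i,a) * \<rho> i b k) = (\<Sum>i\<in>UNIV. t i a * \<rho> i b k - (if i = a then c0 * \<rho> i b k else 0))"
            unfolding v_def by (intro sum.cong refl) (simp add: left_diff_distrib)
          then show ?thesis by (simp add: sum_subtractf)
        qed
        show ?thesis unfolding r Nmat_Some e1 e2 using sa by simp
      qed
    qed
    then have "v = 0" using inj unfolding linear_injective_0[OF matrix_vector_mul_linear] by blast
    then have "t i j = (if i = j then c0 else 0)" for i j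
    proof -
      assume "v = 0"
      then have "v $ (i,j) = 0" by simp
      then show ?thesis unfolding v_def by simp
    qed
    then show "\<exists>c. \<forall>i j. t i j = (if i = j then c else 0)" by blast
  qed
qed

lemma gpoly_nz_iff: "gpoly \<rho> \<noteq> 0 \<longleftrightarrow> good \<rho>"
proof -
  let ?N = "Nmat \<rho>"
  let ?G = "transpose ?N ** ?N"
  have "gpoly \<rho> \<noteq> 0 \<longleftrightarrow> inj ((*v) ?G)"
    unfolding gpoly_def using det_nz_iff_inj[OF matrix_vector_mul_linear[of ?G]] by simp
  also have "\<dots> \<longleftrightarrow> inj ((*v) ?N)"
  proof -
    have k: "?G *v v = 0 \<longleftrightarrow> ?N *v v = 0" for v
    proof
      assume h: "?G *v v = 0"
      have "inner v (?G *v v) = inner v (transpose ?N *v (?N *v v))" by (simp only: matrix_vector_mul_assoc)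
      also have "\<dots> = inner (v v* transpose ?N) (?N *v v)" by (simp only: dot_lmul_matrix)
      also have "\<dots> = inner (?N *v v) (?N *v v)" by (simp only: vector_transpose_matrix)
      finally have "inner (?N *v v) (?N *v v) = inner v (?G *v v)" by simp
      then have "inner (?N *v v) (?N *v v) = 0" using h by simp
      then show "?N *v v = 0" by simp
    next
      assume "?N *v v = 0"
      then show "?G *v v = 0" by (simp add: matrix_vector_mul_assoc[symmetric])
    qed
    show ?thesis unfolding linear_injective_0[OF matrix_vector_mul_linear] using k by blast
  qed
  finally show ?thesis using good_iff_inj by blast
qed

lemma poly_coord: "poly_in V_coords (\<lambda>\<rho>. \<rho> i j k)"
  by (rule poly_in.coord) (auto simp: V_coords_def)

lemma poly_if: "poly_in C f \<Longrightarrow> poly_in C (\<lambda>x. if P then f x else 0)"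
  by (cases P) (simp_all add: poly_in.const)

lemma poly_Nmat: "poly_in V_coords (\<lambda>\<rho>. Nmat \<rho> $ r $ c)"
proof (cases r)
  case None then show ?thesis by (simp add: Nmat_def poly_in.const)
next
  case (Some s)
  then obtain a b k where r: "r = Some (a,b,k)" by (metis prod_cases3)
  show ?thesis unfolding r Nmat_def vec_lambda_beta option.case prod.case
    by (intro poly_in_diff poly_if poly_coord)
qed

lemma gpoly_poly: "V_poly (gpoly :: ('q::finite \<Rightarrow> 'q \<Rightarrow> 'p::finite \<Rightarrow> real) \<Rightarrow> real)"
proof -
  have G: "poly_in V_coords (\<lambda>\<rho>::'q \<Rightarrow> 'q \<Rightarrow> 'p \<Rightarrow> real. (transpose (Nmat \<rho>) ** Nmat \<rho>) $ i $ j)" for i j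
    unfolding matrix_matrix_mult_def transpose_def vec_lambda_beta
    by (intro poly_in_sum poly_in.mult poly_Nmat) simp_all
  have "poly_in V_coords (\<lambda>\<rho>::'q \<Rightarrow> 'q \<Rightarrow> 'p \<Rightarrow> real. \<Sum>p\<in>{p. p permutes (UNIV::('q \<times> 'q) set)}. of_int (sign p) *
          (\<Prod>i\<in>UNIV. (transpose (Nmat \<rho>) ** Nmat \<rho>) $ i $ p i))"
    by (intro poly_in_sum poly_in.mult poly_in.const poly_in_prod G) (simp_all add: finite_permutations)
  then show ?thesis unfolding V_poly_def gpoly_def[abs_def] det_def .
qed


lemma sum_ind:
  fixes f :: "'a::finite \<Rightarrow> real"
  shows "(\<Sum>j\<in>UNIV. f j * ((if j = m \<and> P then 1 else 0) - (if j = n \<and> Q then 1 else 0)))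
       = (if P then f m else 0) - (if Q then f n else 0)"
proof -
  have "(\<Sum>j\<in>UNIV. f j * ((if j = m \<and> P then 1 else 0) - (if j = n \<and> Q then 1 else 0)))
      = (\<Sum>j\<in>UNIV. (if j = m then (if P then f j else 0) else 0) - (if j = n then (if Q then f j else 0) else 0))"
    by (intro sum.cong refl) auto
  also have "\<dots> = (\<Sum>j\<in>UNIV. (if j = m then (if P then f j else 0) else 0)) - (\<Sum>j\<in>UNIV. (if j = n then (if Q then f j else 0) else 0))"
    by (rule sum_subtractf)
  also have "\<dots> = (if P then f m else 0) - (if Q then f n else 0)" by simp
  finally show ?thesis .
qed

lemma example_good:
  fixes i0 :: "'q::finite" and gg :: "'q \<Rightarrow> 'p::finite"
  assumes inj: "inj_on gg (UNIV - {i0})"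
  defines "\<rho>0 \<equiv> (\<lambda>i j k. (if i = i0 \<and> j \<noteq> i0 \<and> gg j = k then 1 else 0) - (if j = i0 \<and> i \<noteq> i0 \<and> gg i = k then 1 else 0)) :: 'q \<Rightarrow> 'q \<Rightarrow> 'p \<Rightarrow> real"
  shows "\<rho>0 \<in> Vpq" and "good \<rho>0"
proof -
  show "\<rho>0 \<in> Vpq" unfolding Vpq_def \<rho>0_def by auto
  have key: "\<rho>0 i j (gg m) = (if i = i0 \<and> j = m then 1 else 0) - (if j = i0 \<and> i = m then 1 else 0)"
    if m: "m \<noteq> i0" for i j m
  proof -
    have "(j \<noteq> i0 \<and> gg j = gg m) \<longleftrightarrow> j = m" for j
      using inj m by (auto dest: inj_onD)
    then show ?thesis unfolding \<rho>0_def by auto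
  qed
  show "good \<rho>0" unfolding good_def
  proof (intro allI impI)
    fix t :: "'q \<Rightarrow> 'q \<Rightarrow> real"
    assume sa: "\<forall>a b k. (\<Sum>j\<in>UNIV. t j b * \<rho>0 a j k) = (\<Sum>i\<in>UNIV. t i a * \<rho>0 i b k)"
    have eq: "(if a = i0 then t m b else 0) - (if a = m then t i0 b else 0)
            = (if b = m then t i0 a else 0) - (if b = i0 then t m a else 0)" if m: "m \<noteq> i0" for a b m
    proof -
      have l: "(\<Sum>j\<in>UNIV. t j b * \<rho>0 a j (gg m)) = (\<Sum>j\<in>UNIV. t j b * ((if j = m \<and> a = i0 then 1 else 0) - (if j = i0 \<and> a = m then 1 else 0)))"
        by (intro sum.cong refl) (simp add: key[OF m] conj_commute)
      have r: "(\<Sum>i\<in>UNIV. t i a * \<rho>0 i b (gg m)) = (\<Sum>i\<in>UNIV. t i a * ((if i = i0 \<and> b = m then 1 else 0) - (if i = m \<and> b = i0 then 1 else 0)))"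
        by (intro sum.cong refl) (simp add: key[OF m])
      have "(\<Sum>j\<in>UNIV. t j b * \<rho>0 a j (gg m)) = (\<Sum>i\<in>UNIV. t i a * \<rho>0 i b (gg m))" using sa by blast
      then show ?thesis unfolding l r sum_ind .
    qed
    have t1: "t m i0 = 0" if "m \<noteq> i0" for m using eq[OF that, of i0 i0] that by simp
    have t2: "t m b = (if b = m then t i0 i0 else 0)" if "m \<noteq> i0" "b \<noteq> i0" for m b
      using eq[OF that(1), of i0 b] that by (auto split: if_splits)
    have t3: "t i0 m = 0" if "m \<noteq> i0" for m using eq[OF that, of m m] that by simp
    show "\<exists>c. \<forall>i j. t i j = (if i = j then c else 0)"
    proof (intro exI allI)
      fix i j
      show "t i j = (if i = j then t i0 i0 else 0)"
        using t1 t2 t3 by (cases "i = i0"; cases "j = i0") auto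
    qed
  qed
qed


lemma field_aut_id:
  fixes \<rho> :: "'q::finite \<Rightarrow> 'q \<Rightarrow> 'p::finite \<Rightarrow> real"
  shows "group_field_aut \<rho> id"
proof -
  have A: "\<forall>i<(1::nat). lie_ideal (lie_br \<rho>) UNIV" by (simp add: lie_ideal_def subspace_UNIV)
  have B: "\<forall>v::(real^'q) \<times> (real^'p). \<exists>!us. (\<forall>i<(1::nat). us i \<in> UNIV) \<and> (\<forall>i\<ge>1. us i = 0) \<and> (\<Sum>i<1. us i) = v"
  proof
    fix v :: "(real^'q) \<times> (real^'p)"
    show "\<exists>!us. (\<forall>i<(1::nat). us i \<in> UNIV) \<and> (\<forall>i\<ge>1. us i = 0) \<and> (\<Sum>i<1. us i) = v"
    proof (rule ex1I[of _ "\<lambda>i. if i = 0 then v else 0"])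
      show "(\<forall>i<(1::nat). (if i = 0 then v else 0) \<in> UNIV) \<and> (\<forall>i\<ge>1. (if i = (0::nat) then v else 0) = 0)
          \<and> (\<Sum>i<1. (if i = (0::nat) then v else 0)) = v" by simp
    next
      fix us :: "nat \<Rightarrow> (real^'q) \<times> (real^'p)"
      assume h: "(\<forall>i<(1::nat). us i \<in> UNIV) \<and> (\<forall>i\<ge>1. us i = 0) \<and> (\<Sum>i<1. us i) = v"
      show "us = (\<lambda>i. if i = 0 then v else 0)"
      proof
        fix i show "us i = (if i = 0 then v else 0)" using h by (cases i) auto
      qed
    qed
  qed
  have C: "\<forall>i<(1::nat). (\<forall>u\<in>(UNIV::((real^'q) \<times> (real^'p)) set). id u = u) \<or> complex_field_map (lie_br \<rho>) UNIV id"
    by simp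
  have D: "\<forall>us::nat \<Rightarrow> (real^'q) \<times> (real^'p). (\<forall>i<(1::nat). us i \<in> UNIV) \<longrightarrow> id (\<Sum>i<1. us i) = (\<Sum>i<1. id (us i))"
    by simp
  show ?thesis unfolding group_field_aut_def field_aut_alg_def
    apply (rule exI[of _ "1::nat"], rule exI[of _ "\<lambda>_::nat. UNIV"], rule exI[of _ "\<lambda>_::nat. id"])
    using A B C D by simp
qed

theorem theorem3p3:
  assumes "CARD('p::finite) \<ge> 1" and "CARD('q::finite) \<ge> 2"
    and "CARD('q) - 1 \<le> CARD('p)"
    and "2 * CARD('p) \<le> CARD('q) * (CARD('q) - 1)"
  shows "\<exists>Ob :: ('q \<Rightarrow> 'q \<Rightarrow> 'p \<Rightarrow> real) set.
           zariski_open_V Ob \<and> zariski_dense_V Ob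
         \<and> (\<forall>\<rho>\<in>Ob \<inter> Vo. partial_automatic_continuity \<rho>)
         \<and> (\<forall>\<rho>\<in>Ob \<inter> Vo. \<forall>F. group_aut \<rho> F \<longrightarrow>
              (\<exists>\<mu> Fb. central_aut \<rho> \<mu> \<and> lie_group_aut \<rho> Fb \<and> F = \<mu> \<circ> Fb))"
proof -
  have q2: "CARD('q) \<ge> 2" using assms(2) .
  define i0 where "i0 = (undefined :: 'q)"
  have "card (UNIV - {i0}) = CARD('q) - 1" by (simp add: card_Diff_singleton)
  then have "card (UNIV - {i0}) \<le> card (UNIV :: 'p set)" using assms(3) by simp
  then obtain gg :: "'q \<Rightarrow> 'p" where gg: "inj_on gg (UNIV - {i0})"
    using card_le_inj[of "UNIV - {i0}" "UNIV :: 'p set"] by auto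
  define \<rho>0 :: "'q \<Rightarrow> 'q \<Rightarrow> 'p \<Rightarrow> real" where "\<rho>0 = (\<lambda>i j k. (if i = i0 \<and> j \<noteq> i0 \<and> gg j = k then 1 else 0) - (if j = i0 \<and> i \<noteq> i0 \<and> gg i = k then 1 else 0))"
  have r0V: "\<rho>0 \<in> Vpq" and r0g: "good \<rho>0" using example_good[OF gg] unfolding \<rho>0_def by auto
  have g0: "gpoly \<rho>0 \<noteq> 0" using r0g gpoly_nz_iff by blast
  define Ob where "Ob = {\<rho> \<in> (Vpq :: ('q \<Rightarrow> 'q \<Rightarrow> 'p \<Rightarrow> real) set). gpoly \<rho> \<noteq> 0}"
  have dec: "\<exists>\<mu> Fb. central_aut \<rho> \<mu> \<and> lie_group_aut \<rho> Fb \<and> F = \<mu> \<circ> Fb"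
    if r: "\<rho> \<in> Ob \<inter> Vo" and F: "group_aut \<rho> F" for \<rho> F
  proof -
    have V: "\<rho> \<in> Vpq" and gp: "gpoly \<rho> \<noteq> 0" using r unfolding Ob_def by auto
    have sp: "span (range (\<lambda>(x,y). brk \<rho> x y)) = UNIV" using r unfolding Vo_def by auto
    have g: "good \<rho>" using gp gpoly_nz_iff by blast
    show ?thesis by (rule main_decomp[OF V g q2 sp F])
  qed
  show ?thesis
  proof (intro exI conjI)
    show "zariski_open_V Ob" unfolding zariski_open_V_def
      by (rule exI[of _ "{gpoly}"]) (simp add: gpoly_poly Ob_def)
    show "zariski_dense_V Ob" unfolding zariski_dense_V_def
    proof (intro conjI allI impI ballI)
      show "Ob \<subseteq> Vpq" unfolding Ob_def by auto
      fix f :: "('q \<Rightarrow> 'q \<Rightarrow> 'p \<Rightarrow> real) \<Rightarrow> real" and \<rho> :: "'q \<Rightarrow> 'q \<Rightarrow> 'p \<Rightarrow> real"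
      assume h: "V_poly f \<and> (\<forall>\<rho>\<in>Ob. f \<rho> = 0)" and r: "\<rho> \<in> Vpq"
      have van: "\<forall>\<rho>\<in>Vpq. gpoly \<rho> \<noteq> 0 \<longrightarrow> f \<rho> = 0" using h unfolding Ob_def by auto
      show "f \<rho> = 0" using density_aux[OF gpoly_poly r0V g0 _ van r] h by blast
    qed
    show "\<forall>\<rho>\<in>Ob \<inter> Vo. partial_automatic_continuity \<rho>"
    proof
      fix \<rho> assume r: "\<rho> \<in> Ob \<inter> Vo"
      show "partial_automatic_continuity \<rho>" unfolding partial_automatic_continuity_def
      proof (intro allI impI)
        fix F assume F: "group_aut \<rho> F"
        obtain \<mu> Fb where "central_aut \<rho> \<mu>" "lie_group_aut \<rho> Fb" "F = \<mu> \<circ> Fb" using dec[OF r F] by blast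
        then show "\<exists>\<mu> Fb \<Phi>. central_aut \<rho> \<mu> \<and> lie_group_aut \<rho> Fb \<and> group_field_aut \<rho> \<Phi> \<and> F = \<mu> \<circ> Fb \<circ> \<Phi>"
          using field_aut_id[of \<rho>] by (intro exI[of _ \<mu>] exI[of _ Fb] exI[of _ id]) simp
      qed
    qed
    show "\<forall>\<rho>\<in>Ob \<inter> Vo. \<forall>F. group_aut \<rho> F \<longrightarrow> (\<exists>\<mu> Fb. central_aut \<rho> \<mu> \<and> lie_group_aut \<rho> Fb \<and> F = \<mu> \<circ> Fb)"
      using dec by blast
  qed
qed

end
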